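(* Let $z^0\in X$, $\gamma\in(0,2)$, $\delta\in[0,1/2)$, and let $\{\sigma_k\},\{\eta_k\}$ be nonnegative with $\sum_k\eta_k<\infty$, $\inf_k\sigma_k>0$; let $z^{k+1}$ be an output of IGPPAstep$(z^k,\sigma_k,\eta_k,\delta,\gamma,M)$ for all $k\ge0$. Assume $T$ satisfies the bounded metric subregularity condition, let $\bar z^0$ be a point of $\Omega$ nearest to $z^0$ in $\|\cdot\|_M$, $r\ge\|\bar z^0\|+\frac{1}{\lambda_{\min}(M)}(\operatorname{dist}_M(z^0,\Omega)+\gamma\sum_k\eta_k)$, and $\kappa_r>0$ with $\operatorname{dist}(z,\Omega)\le\kappa_r\operatorname{dist}(0,T(z))$ for $\|z\|\le r$. Let $\alpha>0$ with $\rho:=\frac{1}{1-\delta}\Big(\sqrt{1-\frac{\min\{\gamma,2\gamma-\gamma^2\}\alpha^2}{\alpha^2+1}}+\delta\big(\frac{\min\{\gamma,1\}}{\sqrt{\alpha^2+1}}+1\big)\Big)<1$ and $C:=\frac{1+\delta}{(1-\delta)(1-\sqrt{1/(\alpha^2+1)})}$. If $\sigma_k\ge\kappa_r\alpha$ for all $k\ge0$, then $\|z^{k+1}-z^k\|_M\le C\rho^k\|z^1-z^0\|_M$ for all $k\ge0$.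
   Context: $X$ is a finite-dimensional real Hilbert space; $T:X\rightrightarrows X$ is maximal monotone with $\Omega:=T^{-1}(0)\neq\emptyset$. $M$ is self-adjoint positive definite with $\lambda_{\max}(M)=1$; $\|z\|_M=\sqrt{\langle z,Mz\rangle}$, $\operatorname{dist}_M(z,D)=\min_{d\in D}\|d-z\|_M$, $\operatorname{dist}=\operatorname{dist}_I$. $\mathcal{J}_{\sigma M^{-1}T}:=(I+\sigma M^{-1}T)^{-1}$. $z^+$ is an output of IGPPAstep$(z,\sigma,\eta,\delta,\gamma,M)$ if $z^+=\gamma w+(1-\gamma)z$ for some $w$ with $\|w-\mathcal{J}_{\sigma M^{-1}T}(z)\|_M\le\min\{\eta,\delta\|w-z\|_M\}$. Bounded metric subregularity: for every $r>0$ there is $\kappa_r>0$ with $\operatorname{dist}(z,\Omega)\le\kappa_r\operatorname{dist}(0,T(z))$ for all $\|z\|\le r$. *)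

theory Defs
  imports "HOL-Analysis.Analysis"
begin

definition monotone_op :: "('a::real_inner \<Rightarrow> 'a set) \<Rightarrow> bool" where
  "monotone_op T \<longleftrightarrow> (\<forall>x y u v. u \<in> T x \<longrightarrow> v \<in> T y \<longrightarrow> 0 \<le> (x - y) \<bullet> (u - v))"

definition maximal_monotone :: "('a::real_inner \<Rightarrow> 'a set) \<Rightarrow> bool" where
  "maximal_monotone T \<longleftrightarrow> monotone_op T \<and>
     (\<forall>S. monotone_op S \<and> (\<forall>x. T x \<subseteq> S x) \<longrightarrow> S = T)"

definition self_adjoint_pd :: "('a::real_inner \<Rightarrow> 'a) \<Rightarrow> bool" where
  "self_adjoint_pd M \<longleftrightarrow> linear M \<and> (\<forall>x y. M x \<bullet> y = x \<bullet> M y) \<and> (\<forall>x. x \<noteq> 0 \<longrightarrow> 0 < x \<bullet> M x)"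

definition lambda_max :: "('a::real_inner \<Rightarrow> 'a) \<Rightarrow> real" where
  "lambda_max M = Sup {x \<bullet> M x | x. norm x = 1}"

definition lambda_min :: "('a::real_inner \<Rightarrow> 'a) \<Rightarrow> real" where
  "lambda_min M = Inf {x \<bullet> M x | x. norm x = 1}"

definition normM :: "('a::real_inner \<Rightarrow> 'a) \<Rightarrow> 'a \<Rightarrow> real" where
  "normM M z = sqrt (z \<bullet> M z)"

definition distM :: "('a::real_inner \<Rightarrow> 'a) \<Rightarrow> 'a \<Rightarrow> 'a set \<Rightarrow> real" where
  "distM M z D = Inf {normM M (d - z) | d. d \<in> D}"

definition zeros :: "('a::real_inner \<Rightarrow> 'a set) \<Rightarrow> 'a set" where
  "zeros T = {z. 0 \<in> T z}"

text \<open>Resolvent (I + \<sigma> M^{-1} T)^{-1} evaluated at z: the point j with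
  z \<in> j + \<sigma> M^{-1} T(j), i.e. M (z - j) \<in> \<sigma> T(j).\<close>
definition resolventM :: "('a::real_inner \<Rightarrow> 'a set) \<Rightarrow> ('a \<Rightarrow> 'a) \<Rightarrow> real \<Rightarrow> 'a \<Rightarrow> 'a" where
  "resolventM T M \<sigma> z = (THE j. \<exists>u \<in> T j. M (z - j) = \<sigma> *\<^sub>R u)"

definition IGPPAstep ::
  "('a::real_inner \<Rightarrow> 'a set) \<Rightarrow> 'a \<Rightarrow> real \<Rightarrow> real \<Rightarrow> real \<Rightarrow> real \<Rightarrow> ('a \<Rightarrow> 'a) \<Rightarrow> 'a \<Rightarrow> bool" where
  "IGPPAstep T z \<sigma> \<eta> \<delta> \<gamma> M zp \<longleftrightarrow>
     (\<exists>w. zp = \<gamma> *\<^sub>R w + (1 - \<gamma>) *\<^sub>R z \<and>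
          normM M (w - resolventM T M \<sigma> z) \<le> min \<eta> (\<delta> * normM M (w - z)))"

definition bounded_metric_subregular :: "('a::real_inner \<Rightarrow> 'a set) \<Rightarrow> bool" where
  "bounded_metric_subregular T \<longleftrightarrow>
     (\<forall>r>0. \<exists>\<kappa>>0. \<forall>z. norm z \<le> r \<longrightarrow> T z \<noteq> {} \<longrightarrow>
         infdist z (zeros T) \<le> \<kappa> * infdist 0 (T z))"

end

theory Submission
  imports Defs "HOL-Analysis.Analysis"
begin

lemma aux1: "(q::real) \<noteq> 0 \<Longrightarrow> X + (p/q)^2 * q - 2*(p/q)*p = X - p^2/q"
  by (simp add: field_simps power2_eq_square)
lemma aux2: "(q::real) > 0 \<Longrightarrow> p^2/q \<le> X \<Longrightarrow> p^2 \<le> X * q"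
  by (simp add: pos_divide_le_eq)

lemma aux3: "(n::real) > 0 \<Longrightarrow> q / n \<le> 1 \<Longrightarrow> q \<le> n"
  by (simp add: divide_le_eq_1)

context
  fixes M :: "'a::euclidean_space \<Rightarrow> 'a"
  assumes M: "self_adjoint_pd M"
begin

lemma M_lin: "linear M" using M unfolding self_adjoint_pd_def by blast
lemma M_sym: "M x \<bullet> y = x \<bullet> M y" using M unfolding self_adjoint_pd_def by blast
lemma M_pos: "0 \<le> x \<bullet> M x"
  using M unfolding self_adjoint_pd_def by (cases "x = 0") (auto simp: linear_0)
lemma M_def0: "x \<bullet> M x = 0 \<Longrightarrow> x = 0"
  using M unfolding self_adjoint_pd_def by force

lemma M_swap: "y \<bullet> M x = x \<bullet> M y" by (metis M_sym inner_commute)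
lemma M_add: "M (x + y) = M x + M y" using linear_add[OF M_lin] .
lemma M_diff: "M (x - y) = M x - M y" using linear_diff[OF M_lin] .
lemma M_scale: "M (c *\<^sub>R x) = c *\<^sub>R M x" using linear_scale[OF M_lin] .
lemma M_zero: "M 0 = 0" using linear_0[OF M_lin] .

lemma nM_sq: "normM M x ^ 2 = x \<bullet> M x"
  unfolding normM_def by (simp add: M_pos)
lemma nM_nonneg: "0 \<le> normM M x" unfolding normM_def by (simp add: M_pos)
lemma nM_zero_iff: "normM M x = 0 \<longleftrightarrow> x = 0"
  unfolding normM_def using M_def0 by (auto simp: M_zero)

lemma M_expand: "(x + y) \<bullet> M (x + y) = x \<bullet> M x + y \<bullet> M y + 2 * (x \<bullet> M y)"
  by (simp add: M_add inner_add_left inner_add_right M_swap[of y x])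

lemma M_expand_diff: "(x - y) \<bullet> M (x - y) = x \<bullet> M x + y \<bullet> M y - 2 * (x \<bullet> M y)"
  by (simp add: M_diff inner_diff_left inner_diff_right M_swap[of y x])

lemma M_scale_quad: "(c *\<^sub>R x) \<bullet> M (c *\<^sub>R x) = c^2 * (x \<bullet> M x)"
  by (simp add: M_scale power2_eq_square)

lemma cs_sq: "(x \<bullet> M y)^2 \<le> (x \<bullet> M x) * (y \<bullet> M y)"
proof (cases "y = 0")
  case True then show ?thesis by (simp add: M_zero)
next
  case False
  then have "y \<bullet> M y \<noteq> 0" using M_def0 by blast
  then have pos: "0 < y \<bullet> M y" using M_pos[of y] by linarith
  define t where "t = (x \<bullet> M y) / (y \<bullet> M y)"
  have "0 \<le> (x - t *\<^sub>R y) \<bullet> M (x - t *\<^sub>R y)" by (rule M_pos)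
  also have "\<dots> = x \<bullet> M x + t^2 * (y \<bullet> M y) - 2 * t * (x \<bullet> M y)"
    unfolding M_expand_diff M_scale_quad inner_scaleR_left M_scale inner_scaleR_right
    by (simp add: algebra_simps) (simp add: power2_eq_square)
  also have "\<dots> = x \<bullet> M x - (x \<bullet> M y)^2 / (y \<bullet> M y)"
    using pos unfolding t_def by (intro aux1) simp
  finally have "(x \<bullet> M y)^2 / (y \<bullet> M y) \<le> x \<bullet> M x" by simp
  then show ?thesis using pos by (intro aux2)
qed

lemma cs: "\<bar>x \<bullet> M y\<bar> \<le> normM M x * normM M y"
proof -
  have "\<bar>x \<bullet> M y\<bar>^2 \<le> (normM M x * normM M y)^2"
    using cs_sq by (simp add: power_mult_distrib nM_sq)
  then show ?thesis
    using nM_nonneg by (meson abs_ge_zero mult_nonneg_nonneg power2_le_imp_le)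
qed

lemma nM_triangle: "normM M (x + y) \<le> normM M x + normM M y"
proof -
  have "normM M (x + y)^2 = normM M x ^2 + normM M y^2 + 2 * (x \<bullet> M y)"
    by (simp add: nM_sq M_expand)
  also have "\<dots> \<le> normM M x ^2 + normM M y^2 + 2 * (normM M x * normM M y)"
    using cs[of x y] by linarith
  also have "\<dots> = (normM M x + normM M y)^2" by (simp add: power2_sum)
  finally show ?thesis using nM_nonneg by (meson add_nonneg_nonneg power2_le_imp_le)
qed

lemma nM_scale: "normM M (c *\<^sub>R x) = \<bar>c\<bar> * normM M x"
  unfolding normM_def M_scale_quad by (simp add: real_sqrt_mult)

lemma nM_minus: "normM M (-x) = normM M x"
  using nM_scale[of "-1" x] by simp

lemma nM_commute: "normM M (x - y) = normM M (y - x)"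
  using nM_minus[of "x - y"] by simp

lemma nM_triangle_diff: "normM M (x - z) \<le> normM M (x - y) + normM M (y - z)"
  using nM_triangle[of "x - y" "y - z"] by simp

lemma M_cont: "continuous_on S M"
  using M_lin linear_continuous_on linear_conv_bounded_linear by blast

lemma nM_cont: "continuous_on S (\<lambda>x. x \<bullet> M x)"
proof -
  have "continuous_on S M" using M_lin linear_continuous_on linear_conv_bounded_linear by blast
  then show ?thesis by (intro continuous_intros) auto
qed

lemma lam_min:
  "0 < lambda_min M \<and> (\<forall>x. lambda_min M * (norm x)^2 \<le> x \<bullet> M x)"
proof -
  define S where "S = {x::'a. norm x = 1}"
  have cS: "compact S" unfolding S_def using compact_sphere[of 0 1]
    by (simp add: sphere_def dist_norm)
  obtain b :: 'a where b: "b \<in> Basis" using nonempty_Basis by blast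
  have neS: "S \<noteq> {}" unfolding S_def using b norm_Basis by blast
  obtain x0 where x0: "x0 \<in> S" "\<forall>y\<in>S. x0 \<bullet> M x0 \<le> y \<bullet> M y"
    using continuous_attains_inf[OF cS neS nM_cont] by blast
  have x0nz: "x0 \<noteq> 0" using x0 unfolding S_def by auto
  have pos: "0 < x0 \<bullet> M x0" using M_pos[of x0] M_def0[of x0] x0nz by linarith
  have lm: "lambda_min M = x0 \<bullet> M x0"
    unfolding lambda_min_def
    by (rule cInf_eq_minimum) (use x0 in \<open>auto simp: S_def\<close>)
  have "lambda_min M * (norm x)^2 \<le> x \<bullet> M x" for x
  proof (cases "x = 0")
    case True then show ?thesis by (simp add: M_zero)
  next
    case False
    define y where "y = (1 / norm x) *\<^sub>R x"
    have "y \<in> S" using False unfolding S_def y_def by simp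
    then have "x0 \<bullet> M x0 \<le> y \<bullet> M y" using x0 by blast
    also have "y \<bullet> M y = (x \<bullet> M x) / (norm x)^2"
      unfolding y_def M_scale_quad by (simp add: field_simps)
    finally show ?thesis using False lm by (simp add: field_simps)
  qed
  then show ?thesis using lm pos by simp
qed

lemma quad_bdd: "\<exists>K. \<forall>x. x \<bullet> M x \<le> K * (norm x)^2"
proof -
  obtain K where K: "\<And>x. norm (M x) \<le> norm x * K"
    using M_lin linear_conv_bounded_linear bounded_linear.bounded by metis
  have "x \<bullet> M x \<le> K * (norm x)^2" for x
  proof -
    have "x \<bullet> M x \<le> norm x * norm (M x)" using norm_cauchy_schwarz by blast
    also have "\<dots> \<le> norm x * (norm x * K)" using K by (simp add: mult_left_mono)
    finally show ?thesis by (simp add: power2_eq_square algebra_simps)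
  qed
  then show ?thesis by blast
qed

lemma nM_le_norm:
  assumes "lambda_max M = 1"
  shows "x \<bullet> M x \<le> (norm x)^2"
proof (cases "x = 0")
  case True then show ?thesis by (simp add: M_zero)
next
  case False
  obtain K where K: "\<forall>x. x \<bullet> M x \<le> K * (norm x)^2" using quad_bdd by blast
  define y where "y = (1 / norm x) *\<^sub>R x"
  have bdd: "bdd_above {x \<bullet> M x | x. norm x = 1}"
  proof (rule bdd_aboveI[where M=K])
    fix q assume "q \<in> {x \<bullet> M x | x. norm x = 1}"
    then obtain x' where q: "q = x' \<bullet> M x'" and n1: "norm x' = 1" by blast
    have "x' \<bullet> M x' \<le> K * (norm x')^2" using K by blast
    then show "q \<le> K" using q n1 by simp
  qed
  have "y \<bullet> M y \<le> lambda_max M"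
    unfolding lambda_max_def
  proof (rule cSup_upper[OF _ bdd])
    have "norm y = 1" using False by (simp add: y_def)
    then show "y \<bullet> M y \<in> {x \<bullet> M x | x. norm x = 1}" by blast
  qed
  moreover have "y \<bullet> M y = (x \<bullet> M x) / (norm x)^2"
    unfolding y_def M_scale_quad by (simp add: field_simps)
  ultimately have d: "(x \<bullet> M x) / (norm x)^2 \<le> 1" using assms by linarith
  have n2: "0 < (norm x)^2" using False by simp
  show ?thesis by (rule aux3[OF n2 d])
qed

lemma Mx_norm:
  assumes "lambda_max M = 1"
  shows "(norm (M x))^2 \<le> x \<bullet> M x"
proof -
  have "(M x \<bullet> M x)^2 = (x \<bullet> M (M x))^2" by (simp add: M_sym)
  also have "\<dots> \<le> (x \<bullet> M x) * (M x \<bullet> M (M x))" by (rule cs_sq)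
  also have "\<dots> \<le> (x \<bullet> M x) * (norm (M x))^2"
    using nM_le_norm[OF assms, of "M x"] M_pos[of x] by (simp add: mult_left_mono)
  finally have h0: "(M x \<bullet> M x)^2 \<le> (x \<bullet> M x) * (norm (M x))^2" .
  have e: "M x \<bullet> M x = (norm (M x))^2" by (simp add: power2_norm_eq_inner)
  define N where "N = (norm (M x))^2"
  have h: "N * N \<le> (x \<bullet> M x) * N" using h0 unfolding e N_def by (simp add: power2_eq_square)
  show ?thesis
  proof (cases "N = 0")
    case True then show ?thesis using M_pos N_def by simp
  next
    case False then have "N > 0" unfolding N_def by simp
    then have "N \<le> x \<bullet> M x" using h by (simp add: mult_le_cancel_right)
    then show ?thesis using N_def by simp
  qed
qed

end

lemma maxmono_add:
  assumes T: "maximal_monotone T"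
    and H: "\<forall>a b. b \<in> T a \<longrightarrow> 0 \<le> (x - a) \<bullet> (v - b)"
  shows "v \<in> T x"
proof -
  define S where "S = (\<lambda>y. if y = x then insert v (T y) else T y)"
  have mT: "monotone_op T" using T unfolding maximal_monotone_def by blast
  have "monotone_op S"
    unfolding monotone_op_def
  proof (intro allI impI)
    fix y1 y2 u1 u2 assume u1: "u1 \<in> S y1" and u2: "u2 \<in> S y2"
    have sym: "(y1 - y2) \<bullet> (u1 - u2) = (y2 - y1) \<bullet> (u2 - u1)"
    proof -
      have "y2 - y1 = - (y1 - y2)" "u2 - u1 = - (u1 - u2)" by simp_all
      then show ?thesis by (simp only: inner_minus_left inner_minus_right minus_minus)
    qed
    show "0 \<le> (y1 - y2) \<bullet> (u1 - u2)"
    proof (cases "y1 = x \<and> u1 = v")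
      case c1: True
      show ?thesis
      proof (cases "y2 = x \<and> u2 = v")
        case True then show ?thesis using c1 by simp
      next
        case False
        then have "u2 \<in> T y2" using u2 unfolding S_def by (auto split: if_splits)
        then have "0 \<le> (x - y2) \<bullet> (v - u2)" using H by blast
        then show ?thesis using c1 by simp
      qed
    next
      case c1: False
      then have t1: "u1 \<in> T y1" using u1 unfolding S_def by (auto split: if_splits)
      show ?thesis
      proof (cases "y2 = x \<and> u2 = v")
        case True
        have "0 \<le> (x - y1) \<bullet> (v - u1)" using H t1 by blast
        then show ?thesis using True sym by simp
      next
        case False
        then have "u2 \<in> T y2" using u2 unfolding S_def by (auto split: if_splits)
        then show ?thesis using mT t1 unfolding monotone_op_def by blast
      qed
    qed
  qed
  moreover have "\<forall>y. T y \<subseteq> S y" unfolding S_def by auto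
  ultimately have "S = T" using T unfolding maximal_monotone_def by blast
  moreover have "v \<in> S x" unfolding S_def by simp
  ultimately show ?thesis by simp
qed

lemma zeros_char:
  assumes T: "maximal_monotone T"
  shows "zeros T = \<Inter> {{z. b \<bullet> z \<le> b \<bullet> a} | a b. b \<in> T a}"
proof
  have mT: "monotone_op T" using T unfolding maximal_monotone_def by blast
  show "zeros T \<subseteq> \<Inter> {{z. b \<bullet> z \<le> b \<bullet> a} | a b. b \<in> T a}"
  proof
    fix z assume "z \<in> zeros T"
    then have z: "0 \<in> T z" unfolding zeros_def by simp
    have "b \<bullet> z \<le> b \<bullet> a" if "b \<in> T a" for a b
    proof -
      have "0 \<le> (a - z) \<bullet> (b - 0)" using mT z that unfolding monotone_op_def by blast
      moreover have "(a - z) \<bullet> b = b \<bullet> a - b \<bullet> z" by (metis inner_commute inner_diff_right)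
      ultimately show ?thesis by simp
    qed
    then show "z \<in> \<Inter> {{z. b \<bullet> z \<le> b \<bullet> a} | a b. b \<in> T a}" by blast
  qed
  show "\<Inter> {{z. b \<bullet> z \<le> b \<bullet> a} | a b. b \<in> T a} \<subseteq> zeros T"
  proof
    fix z assume z: "z \<in> \<Inter> {{z. b \<bullet> z \<le> b \<bullet> a} | a b. b \<in> T a}"
    have "\<forall>a b. b \<in> T a \<longrightarrow> 0 \<le> (z - a) \<bullet> (0 - b)"
    proof (intro allI impI)
      fix a b assume "b \<in> T a"
      then have "b \<bullet> z \<le> b \<bullet> a" using z by blast
      moreover have "(z - a) \<bullet> (0 - b) = b \<bullet> a - b \<bullet> z"
        by (metis diff_0 inner_commute inner_diff_right inner_minus_right minus_diff_eq)
      ultimately show "0 \<le> (z - a) \<bullet> (0 - b)" by simp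
    qed
    then have "0 \<in> T z" using maxmono_add[OF T] by blast
    then show "z \<in> zeros T" unfolding zeros_def by simp
  qed
qed

lemma zeros_closed: "maximal_monotone T \<Longrightarrow> closed (zeros T)"
  by (subst zeros_char) (auto intro!: closed_Inter closed_halfspace_le)

lemma zeros_convex: "maximal_monotone T \<Longrightarrow> convex (zeros T)"
  by (subst zeros_char) (auto intro!: convex_Inter convex_halfspace_le)

context
  fixes M :: "'a::euclidean_space \<Rightarrow> 'a"
  assumes M: "self_adjoint_pd M"
begin

lemma proj_exists:
  assumes S: "closed S" "S \<noteq> {}"
  shows "\<exists>p\<in>S. \<forall>d\<in>S. normM M (p - z) \<le> normM M (d - z)"
proof -
  define f where "f = (\<lambda>d. (d - z) \<bullet> M (d - z))"
  obtain d0 where d0: "d0 \<in> S" using S by blast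
  define lm where "lm = lambda_min M"
  have lm: "0 < lm" "\<And>x. lm * (norm x)^2 \<le> x \<bullet> M x" using lam_min[OF M] lm_def by auto
  define B where "B = sqrt (f d0 / lm) + 1"
  have f0: "0 \<le> f d0" unfolding f_def using M_pos[OF M] by simp
  have B0: "0 \<le> B" unfolding B_def using f0 lm by simp
  have B2: "f d0 / lm \<le> B^2"
  proof -
    have "f d0 / lm = (sqrt (f d0 / lm))^2" using f0 lm by simp
    also have "\<dots> \<le> B^2" unfolding B_def using f0 lm by (intro power_mono) auto
    finally show ?thesis .
  qed
  have far: "f d0 < f d" if "d \<notin> cball z B" for d
  proof -
    have "B < norm (d - z)" using that by (simp add: dist_norm norm_minus_commute)
    then have "B^2 < (norm (d - z))^2" using B0 by (simp add: power_strict_mono)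
    then have "lm * B^2 < lm * (norm (d - z))^2" using lm by simp
    moreover have "f d0 \<le> lm * B^2" using B2 lm by (simp add: field_simps)
    ultimately show ?thesis using lm(2)[of "d - z"] unfolding f_def by linarith
  qed
  have d0K: "d0 \<in> cball z B"
    using far[of d0] by auto
  define K where "K = S \<inter> cball z B"
  have cK: "compact K" unfolding K_def using S by (intro closed_Int_compact) auto
  have neK: "K \<noteq> {}" using d0 d0K unfolding K_def by blast
  have cf: "continuous_on K f"
  proof -
    have "f = (\<lambda>d. (d - z) \<bullet> (M d - M z))" unfolding f_def by (simp add: M_diff[OF M])
    moreover have "continuous_on K (\<lambda>d. (d - z) \<bullet> (M d - M z))"
      by (intro continuous_intros M_cont[OF M])
    ultimately show ?thesis by simp
  qed
  obtain p where p: "p \<in> K" "\<forall>d\<in>K. f p \<le> f d"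
    using continuous_attains_inf[OF cK neK cf] by blast
  have "f p \<le> f d" if "d \<in> S" for d
  proof (cases "d \<in> cball z B")
    case True then show ?thesis using p that unfolding K_def by blast
  next
    case False
    have "f p \<le> f d0" using p d0 d0K unfolding K_def by blast
    then show ?thesis using far[OF False] by linarith
  qed
  then have "normM M (p - z) \<le> normM M (d - z)" if "d \<in> S" for d
    using that unfolding normM_def f_def by (simp add: real_sqrt_le_iff)
  then show ?thesis using p unfolding K_def by blast
qed

lemma distM_eq:
  assumes "p \<in> D" "\<forall>d\<in>D. normM M (p - z) \<le> normM M (d - z)"
  shows "distM M z D = normM M (p - z)"
  unfolding distM_def by (rule cInf_eq_minimum) (use assms in auto)

end

lemma sym_sum_nonpos:
  fixes G :: "('a::real_inner \<times> 'a) set" and l :: "'a \<times> 'a \<Rightarrow> real"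
  assumes fin: "finite G" and lnn: "\<And>g. g \<in> G \<Longrightarrow> 0 \<le> l g"
    and mono: "\<And>g g'. g \<in> G \<Longrightarrow> g' \<in> G \<Longrightarrow> 0 \<le> (fst g - fst g') \<bullet> (snd g - snd g')"
  shows "(\<Sum>g\<in>G. \<Sum>g'\<in>G. l g * l g' * ((fst g' - fst g) \<bullet> snd g)) \<le> 0"
proof -
  define Q where "Q = (\<Sum>g\<in>G. \<Sum>g'\<in>G. l g * l g' * ((fst g' - fst g) \<bullet> snd g))"
  have Q2: "Q = (\<Sum>g\<in>G. \<Sum>g'\<in>G. l g * l g' * ((fst g - fst g') \<bullet> snd g'))"
    unfolding Q_def by (subst sum.swap) (simp add: mult.commute mult.left_commute)
  have "2 * Q = Q + Q" by simp
  also have "\<dots> = (\<Sum>g\<in>G. \<Sum>g'\<in>G. l g * l g' * ((fst g' - fst g) \<bullet> snd g)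
                 + l g * l g' * ((fst g - fst g') \<bullet> snd g'))"
    by (subst (2) Q2) (simp add: Q_def sum.distrib)
  also have "\<dots> = (\<Sum>g\<in>G. \<Sum>g'\<in>G. - (l g * l g' * ((fst g' - fst g) \<bullet> (snd g' - snd g))))"
  proof (intro sum.cong refl)
    fix g g' :: "'a \<times> 'a"
    have "(fst g' - fst g) \<bullet> snd g + (fst g - fst g') \<bullet> snd g'
          = - ((fst g' - fst g) \<bullet> (snd g' - snd g))"
      by (simp add: inner_diff_left inner_diff_right)
    then show "l g * l g' * ((fst g' - fst g) \<bullet> snd g) + l g * l g' * ((fst g - fst g') \<bullet> snd g')
          = - (l g * l g' * ((fst g' - fst g) \<bullet> (snd g' - snd g)))"
      by (metis distrib_left mult_minus_right)
  qed
  also have "\<dots> \<le> 0"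
  proof (intro sum_nonpos)
    fix g g' assume g: "g \<in> G" and g': "g' \<in> G"
    have "0 \<le> l g * l g' * ((fst g' - fst g) \<bullet> (snd g' - snd g))"
      using lnn[OF g] lnn[OF g'] mono[OF g' g] by simp
    then show "- (l g * l g' * ((fst g' - fst g) \<bullet> (snd g' - snd g))) \<le> 0" by simp
  qed
  finally show ?thesis unfolding Q_def by simp
qed

lemma debrunner_flor:
  fixes G :: "('a::euclidean_space \<times> 'a) set" and v :: "'a \<Rightarrow> 'a"
  assumes fin: "finite G" and ne: "G \<noteq> {}"
    and mono: "\<And>g g'. g \<in> G \<Longrightarrow> g' \<in> G \<Longrightarrow> 0 \<le> (fst g - fst g') \<bullet> (snd g - snd g')"
    and cv: "continuous_on UNIV v"
  shows "\<exists>x. \<forall>g\<in>G. 0 \<le> (x - fst g) \<bullet> (v x - snd g)"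
proof (rule ccontr)
  assume neg: "\<not> ?thesis"
  define C where "C = convex hull (fst ` G)"
  define h where "h = (\<lambda>g x. (x - fst g) \<bullet> (snd g - v x))"
  define ph where "ph = (\<lambda>g x. max 0 (h g x))"
  define S where "S = (\<lambda>x. \<Sum>g\<in>G. ph g x)"
  have hpos: "\<exists>g\<in>G. 0 < h g x" for x
  proof -
    obtain g where g: "g \<in> G" "\<not> 0 \<le> (x - fst g) \<bullet> (v x - snd g)" using neg by blast
    have "h g x = - ((x - fst g) \<bullet> (v x - snd g))"
      unfolding h_def by (simp add: inner_diff_right)
    then have "0 < h g x" using g(2) by linarith
    then show ?thesis using g(1) by blast
  qed
  have phnn: "0 \<le> ph g x" for g x unfolding ph_def by simp
  have Spos: "0 < S x" for x
  proof -
    obtain g where g: "g \<in> G" "0 < h g x" using hpos by blast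
    have "0 < ph g x" using g unfolding ph_def by simp
    then show ?thesis unfolding S_def using fin g phnn by (intro sum_pos2[of G g]) auto
  qed
  have cph: "continuous_on C (ph g)" for g
  proof -
    have cv': "continuous_on C v" using cv continuous_on_subset by blast
    have "continuous_on C (\<lambda>x. max 0 ((x - fst g) \<bullet> (snd g - v x)))"
      by (intro continuous_intros cv')
    then show ?thesis unfolding ph_def h_def by simp
  qed
  have cS: "continuous_on C S" unfolding S_def by (intro continuous_on_sum cph)
  define f where "f = (\<lambda>x. \<Sum>g\<in>G. (ph g x / S x) *\<^sub>R fst g)"
  have cf: "continuous_on C f"
  proof -
    have "continuous_on C (\<lambda>x. ph g x / S x)" for g
      using Spos by (intro continuous_on_divide cph cS) (auto simp: less_imp_neq[symmetric])
    then show ?thesis unfolding f_def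
      by (intro continuous_on_sum continuous_on_scaleR continuous_on_const) auto
  qed
  have sum1: "(\<Sum>g\<in>G. ph g x / S x) = 1" for x
    using Spos[of x] unfolding S_def by (simp add: sum_divide_distrib[symmetric])
  have fC: "f \<in> C \<rightarrow> C"
  proof
    fix x assume "x \<in> C"
    show "f x \<in> C" unfolding f_def
    proof (rule convex_sum[OF fin])
      show "convex C" unfolding C_def by (rule convex_convex_hull)
      show "(\<Sum>g\<in>G. ph g x / S x) = 1" by (rule sum1)
      show "\<And>g. g \<in> G \<Longrightarrow> 0 \<le> ph g x / S x" using phnn Spos by (simp add: less_imp_le)
      show "\<And>g. g \<in> G \<Longrightarrow> fst g \<in> C" unfolding C_def by (meson hull_subset image_eqI subsetD)
    qed
  qed
  have cC: "compact C" unfolding C_def using fin by (simp add: finite_imp_compact_convex_hull)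
  have neC: "C \<noteq> {}" unfolding C_def using ne by simp
  have convC: "convex C" unfolding C_def by (rule convex_convex_hull)
  obtain x where x: "x \<in> C" "f x = x" using brouwer[OF cC convC neC cf fC] by blast
  define l where "l = (\<lambda>g. ph g x / S x)"
  have lnn: "0 \<le> l g" for g unfolding l_def using phnn Spos by (simp add: less_imp_le)
  have lsum: "(\<Sum>g\<in>G. l g) = 1" unfolding l_def by (rule sum1)
  have xeq: "x = (\<Sum>g\<in>G. l g *\<^sub>R fst g)" using x(2) unfolding f_def l_def by simp
  have pos: "0 < (\<Sum>g\<in>G. l g * h g x)"
  proof -
    obtain g0 where g0: "g0 \<in> G" "0 < h g0 x" using hpos by blast
    have eq: "l g * h g x = ph g x * ph g x / S x" for g
      unfolding l_def ph_def by (cases "0 \<le> h g x") auto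
    have "0 < l g0 * h g0 x" unfolding eq using g0 Spos[of x] unfolding ph_def by simp
    moreover have "0 \<le> l g * h g x" for g unfolding eq using Spos[of x] by simp
    ultimately show ?thesis using fin g0 by (intro sum_pos2[of G g0]) auto
  qed
  have diffeq: "x - fst g = (\<Sum>g'\<in>G. l g' *\<^sub>R (fst g' - fst g))" for g
  proof -
    have "(\<Sum>g'\<in>G. l g' *\<^sub>R (fst g' - fst g)) = (\<Sum>g'\<in>G. l g' *\<^sub>R fst g') - (\<Sum>g'\<in>G. l g' *\<^sub>R fst g)"
      by (simp add: scaleR_right_diff_distrib sum_subtractf)
    also have "(\<Sum>g'\<in>G. l g' *\<^sub>R fst g) = fst g"
      using lsum by (simp add: scaleR_sum_left[symmetric])
    finally show ?thesis using xeq by simp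
  qed
  have zero: "(\<Sum>g\<in>G. l g *\<^sub>R (x - fst g)) = 0"
  proof -
    have "(\<Sum>g\<in>G. l g *\<^sub>R (x - fst g)) = (\<Sum>g\<in>G. l g *\<^sub>R x) - (\<Sum>g\<in>G. l g *\<^sub>R fst g)"
      by (simp add: scaleR_right_diff_distrib sum_subtractf)
    also have "(\<Sum>g\<in>G. l g *\<^sub>R x) = x" using lsum by (simp add: scaleR_sum_left[symmetric])
    finally show ?thesis using xeq by simp
  qed
  have "(\<Sum>g\<in>G. l g * h g x)
      = (\<Sum>g\<in>G. l g * ((x - fst g) \<bullet> snd g)) - (\<Sum>g\<in>G. l g * ((x - fst g) \<bullet> v x))"
    unfolding h_def by (simp add: inner_diff_right right_diff_distrib sum_subtractf)
  also have "(\<Sum>g\<in>G. l g * ((x - fst g) \<bullet> v x)) = (\<Sum>g\<in>G. l g *\<^sub>R (x - fst g)) \<bullet> v x"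
    by (simp add: inner_sum_left)
  also have "\<dots> = 0" using zero by simp
  also have "(\<Sum>g\<in>G. l g * ((x - fst g) \<bullet> snd g))
      = (\<Sum>g\<in>G. \<Sum>g'\<in>G. l g * l g' * ((fst g' - fst g) \<bullet> snd g))"
  proof (intro sum.cong refl)
    fix g
    have "l g * ((x - fst g) \<bullet> snd g) = l g * ((\<Sum>g'\<in>G. l g' *\<^sub>R (fst g' - fst g)) \<bullet> snd g)"
      using diffeq[of g] by simp
    also have "\<dots> = (\<Sum>g'\<in>G. l g * l g' * ((fst g' - fst g) \<bullet> snd g))"
      by (simp add: inner_sum_left sum_distrib_left mult.assoc)
    finally show "l g * ((x - fst g) \<bullet> snd g) = (\<Sum>g'\<in>G. l g * l g' * ((fst g' - fst g) \<bullet> snd g))" .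
  qed
  finally have "(\<Sum>g\<in>G. l g * h g x) = (\<Sum>g\<in>G. \<Sum>g'\<in>G. l g * l g' * ((fst g' - fst g) \<bullet> snd g))"
    by simp
  also have "\<dots> \<le> 0" by (rule sym_sum_nonpos[OF fin lnn mono])
  finally show False using pos by simp
qed


lemma minty:
  fixes T :: "'a::euclidean_space \<Rightarrow> 'a set" and M :: "'a \<Rightarrow> 'a"
  assumes T: "maximal_monotone T" and b0: "b0 \<in> T a0" and M: "self_adjoint_pd M"
    and sig: "0 < \<sigma>"
  shows "\<exists>j. \<exists>u\<in>T j. M (z - j) = \<sigma> *\<^sub>R u"
proof -
  have mT: "monotone_op T" using T unfolding maximal_monotone_def by blast
  define v where "v = (\<lambda>x. (1 / \<sigma>) *\<^sub>R M (z - x))"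
  have v_alt: "v = (\<lambda>x. (1 / \<sigma>) *\<^sub>R (M z - M x))" unfolding v_def by (simp add: M_diff[OF M])
  have cv: "continuous_on UNIV v" unfolding v_alt by (intro continuous_intros M_cont[OF M])
  define K where "K = (\<lambda>g. {x. 0 \<le> (x - fst g) \<bullet> (v x - snd g)})"
  have clK: "closed (K g)" for g
  proof -
    have "continuous_on UNIV (\<lambda>x. (x - fst g) \<bullet> (v x - snd g))"
      by (intro continuous_intros cv)
    then show ?thesis unfolding K_def by (intro closed_Collect_le continuous_on_const) auto
  qed
  define lm where "lm = lambda_min M"
  have lm: "0 < lm" "\<And>x. lm * (norm x)^2 \<le> x \<bullet> M x" using lam_min[OF M] lm_def by auto
  define c where "c = (1 / \<sigma>) *\<^sub>R M (z - a0) - b0"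
  have bK: "K (a0, b0) \<subseteq> cball a0 (\<sigma> * norm c / lm)"
  proof
    fix x assume "x \<in> K (a0, b0)"
    then have h: "0 \<le> (x - a0) \<bullet> (v x - b0)" unfolding K_def by simp
    define y where "y = x - a0"
    have "v x - b0 = c - (1 / \<sigma>) *\<^sub>R M y"
      unfolding v_def c_def y_def by (simp add: M_diff[OF M] algebra_simps)
    then have "(x - a0) \<bullet> (v x - b0) = y \<bullet> c - (1 / \<sigma>) * (y \<bullet> M y)"
      unfolding y_def by (simp add: inner_diff_right)
    then have "(1 / \<sigma>) * (y \<bullet> M y) \<le> y \<bullet> c" using h by linarith
    also have "\<dots> \<le> norm y * norm c" by (rule norm_cauchy_schwarz)
    finally have "y \<bullet> M y \<le> \<sigma> * (norm y * norm c)" using sig by (simp add: field_simps)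
    then have "lm * (norm y)^2 \<le> \<sigma> * (norm y * norm c)" using lm(2)[of y] by linarith
    then have "lm * norm y * norm y \<le> (\<sigma> * norm c) * norm y" by (simp add: power2_eq_square algebra_simps)
    then have "lm * norm y \<le> \<sigma> * norm c"
      by (cases "norm y = 0") (use lm sig in \<open>auto simp: mult_le_cancel_right\<close>)
    then have "norm y \<le> \<sigma> * norm c / lm" using lm by (simp add: field_simps)
    then show "x \<in> cball a0 (\<sigma> * norm c / lm)" unfolding y_def by (simp add: dist_norm norm_minus_commute)
  qed
  have cK0: "compact (K (a0, b0))"
    using clK bK by (meson bounded_cball bounded_subset compact_eq_bounded_closed)
  define Gr where "Gr = {g. snd g \<in> T (fst g)}"
  have "K (a0, b0) \<inter> \<Inter> (K ` Gr) \<noteq> {}"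
  proof (rule compact_imp_fip[OF cK0])
    show "\<And>S. S \<in> K ` Gr \<Longrightarrow> closed S" using clK by blast
    fix F' assume F': "finite F'" "F' \<subseteq> K ` Gr"
    obtain G' where G': "G' \<subseteq> Gr" "finite G'" "F' = K ` G'" using finite_subset_image[OF F'] by blast
    define G where "G = insert (a0, b0) G'"
    have finG: "finite G" and neG: "G \<noteq> {}" unfolding G_def using G' by auto
    have GGr: "G \<subseteq> Gr" unfolding G_def Gr_def using G' b0 by (auto simp: Gr_def)
    have mono: "0 \<le> (fst g - fst g') \<bullet> (snd g - snd g')" if "g \<in> G" "g' \<in> G" for g g'
      using mT GGr that unfolding monotone_op_def Gr_def by blast
    obtain x where x: "\<forall>g\<in>G. 0 \<le> (x - fst g) \<bullet> (v x - snd g)"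
      using debrunner_flor[OF finG neG mono cv] by blast
    have "x \<in> K (a0, b0)" using x unfolding K_def G_def by auto
    moreover have "x \<in> \<Inter> F'" using x unfolding G'(3) K_def G_def by auto
    ultimately show "K (a0, b0) \<inter> \<Inter> F' \<noteq> {}" by blast
  qed
  then obtain x where x: "x \<in> \<Inter> (K ` Gr)" by blast
  have "\<forall>a b. b \<in> T a \<longrightarrow> 0 \<le> (x - a) \<bullet> (v x - b)"
  proof (intro allI impI)
    fix a b assume "b \<in> T a"
    then have "(a, b) \<in> Gr" unfolding Gr_def by simp
    then have "x \<in> K (a, b)" using x by blast
    then show "0 \<le> (x - a) \<bullet> (v x - b)" unfolding K_def by simp
  qed
  then have "v x \<in> T x" by (rule maxmono_add[OF T])
  moreover have "M (z - x) = \<sigma> *\<^sub>R v x" unfolding v_def using sig by simp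
  ultimately show ?thesis by blast
qed

lemma resolvent_prop:
  fixes T :: "'a::euclidean_space \<Rightarrow> 'a set" and M :: "'a \<Rightarrow> 'a"
  assumes T: "maximal_monotone T" and Om: "zeros T \<noteq> {}" and M: "self_adjoint_pd M"
    and sig: "0 < \<sigma>"
  shows "\<exists>u\<in>T (resolventM T M \<sigma> z). M (z - resolventM T M \<sigma> z) = \<sigma> *\<^sub>R u"
proof -
  have mT: "monotone_op T" using T unfolding maximal_monotone_def by blast
  obtain a0 where "0 \<in> T a0" using Om unfolding zeros_def by blast
  then obtain j where j: "\<exists>u\<in>T j. M (z - j) = \<sigma> *\<^sub>R u" using minty[OF T _ M sig] by blast
  have uniq: "j1 = j2" if h1: "\<exists>u\<in>T j1. M (z - j1) = \<sigma> *\<^sub>R u" and h2: "\<exists>u\<in>T j2. M (z - j2) = \<sigma> *\<^sub>R u" for j1 j2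
  proof -
    obtain u1 where u1: "u1 \<in> T j1" "M (z - j1) = \<sigma> *\<^sub>R u1" using h1 by blast
    obtain u2 where u2: "u2 \<in> T j2" "M (z - j2) = \<sigma> *\<^sub>R u2" using h2 by blast
    have m: "0 \<le> (j1 - j2) \<bullet> (u1 - u2)" using mT u1 u2 unfolding monotone_op_def by blast
    have "\<sigma> *\<^sub>R (u1 - u2) = M (z - j1) - M (z - j2)" using u1 u2 by (simp add: scaleR_diff_right)
    also have "\<dots> = - M (j1 - j2)" by (simp add: M_diff[OF M])
    finally have "\<sigma> * ((j1 - j2) \<bullet> (u1 - u2)) = - ((j1 - j2) \<bullet> M (j1 - j2))"
      by (metis inner_minus_right inner_scaleR_right)
    then have "(j1 - j2) \<bullet> M (j1 - j2) \<le> 0" using m sig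
      by (metis mult_nonneg_nonneg less_imp_le neg_0_le_iff_le)
    then have "(j1 - j2) \<bullet> M (j1 - j2) = 0" using M_pos[OF M, of "j1 - j2"] by linarith
    then have "j1 - j2 = 0" by (rule M_def0[OF M])
    then show ?thesis by simp
  qed
  have ex1: "\<exists>!j. \<exists>u\<in>T j. M (z - j) = \<sigma> *\<^sub>R u" using j uniq by blast
  show ?thesis using theI'[OF ex1] unfolding resolventM_def .
qed


lemma relax_real: "(1-g)^2*p + g^2*q + 2*(1-g)*g*r = (1-g)*p + g*q - g*(1-g)*(p + q - 2*r)" for g p q r :: real
  by (simp add: power2_eq_square algebra_simps)

context
  fixes M :: "'a::euclidean_space \<Rightarrow> 'a"
  assumes M: "self_adjoint_pd M"
begin

lemma quad_comb:
  "(a *\<^sub>R A + b *\<^sub>R B) \<bullet> M (a *\<^sub>R A + b *\<^sub>R B)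
     = a^2 * (A \<bullet> M A) + b^2 * (B \<bullet> M B) + 2 * a * b * (A \<bullet> M B)"
  by (simp add: M_expand[OF M] M_scale_quad[OF M] M_scale[OF M]) (simp add: power2_eq_square)

lemma relax_id:
  "((1-g) *\<^sub>R A + g *\<^sub>R B) \<bullet> M ((1-g) *\<^sub>R A + g *\<^sub>R B)
    = (1-g) * (A \<bullet> M A) + g * (B \<bullet> M B) - g * (1-g) * ((A - B) \<bullet> M (A - B))"
  unfolding quad_comb M_expand_diff[OF M] by (rule relax_real)

lemma nM_le_norm': "lambda_max M = 1 \<Longrightarrow> normM M v \<le> norm v"
proof -
  assume a: "lambda_max M = 1"
  have "normM M v ^2 \<le> (norm v)^2" unfolding nM_sq[OF M] by (rule nM_le_norm[OF M a])
  then show ?thesis by (rule power2_le_imp_le) simp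
qed

lemma norm_le_nM:
  assumes "lambda_max M = 1"
  shows "norm v \<le> normM M v / lambda_min M"
proof -
  have lm: "0 < lambda_min M" "\<And>x. lambda_min M * (norm x)^2 \<le> x \<bullet> M x" using lam_min[OF M] by auto
  obtain b :: 'a where b: "b \<in> Basis" using nonempty_Basis by blast
  have "lambda_min M * (norm b)^2 \<le> b \<bullet> M b" by (rule lm(2))
  also have "\<dots> \<le> (norm b)^2" by (rule nM_le_norm[OF M assms])
  finally have l1: "lambda_min M \<le> 1" using b by simp
  have "(lambda_min M * norm v)^2 = lambda_min M * (lambda_min M * (norm v)^2)"
    by (simp add: power2_eq_square)
  also have "\<dots> \<le> 1 * (lambda_min M * (norm v)^2)"
    using l1 lm(1) by (intro mult_right_mono) auto
  also have "\<dots> \<le> v \<bullet> M v" using lm(2)[of v] by simp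
  also have "\<dots> = (normM M v)^2" by (simp add: nM_sq[OF M])
  finally have "lambda_min M * norm v \<le> normM M v"
    by (rule power2_le_imp_le) (rule nM_nonneg[OF M])
  then show ?thesis using lm(1) by (simp add: field_simps)
qed

lemma distM_char:
  fixes T :: "'a \<Rightarrow> 'a set"
  assumes T: "maximal_monotone T" and Om: "zeros T \<noteq> {}"
  shows "\<exists>p\<in>zeros T. distM M z (zeros T) = normM M (p - z) \<and> (\<forall>d\<in>zeros T. normM M (p - z) \<le> normM M (d - z))"
proof -
  obtain p where p: "p \<in> zeros T" "\<forall>d\<in>zeros T. normM M (p - z) \<le> normM M (d - z)"
    using proj_exists[OF M zeros_closed[OF T] Om] by blast
  then show ?thesis using distM_eq[OF M p] by blast
qed

lemma distM_le:
  fixes T :: "'a \<Rightarrow> 'a set"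
  assumes T: "maximal_monotone T" and Om: "zeros T \<noteq> {}" and d: "d \<in> zeros T"
  shows "distM M z (zeros T) \<le> normM M (d - z)"
  using distM_char[OF T Om, of z] d by auto

lemma firm:
  fixes T :: "'a \<Rightarrow> 'a set"
  assumes T: "maximal_monotone T" and sig: "0 < \<sigma>"
    and u: "u \<in> T J" "M (z - J) = \<sigma> *\<^sub>R u" and zs: "zs \<in> zeros T"
  shows "normM M (J - zs)^2 + normM M (z - J)^2 \<le> normM M (z - zs)^2"
proof -
  have mT: "monotone_op T" using T unfolding maximal_monotone_def by blast
  have "0 \<le> (J - zs) \<bullet> (u - 0)" using mT u(1) zs unfolding monotone_op_def zeros_def by blast
  then have "0 \<le> \<sigma> * ((J - zs) \<bullet> u)" using sig by simp
  also have "\<sigma> * ((J - zs) \<bullet> u) = (J - zs) \<bullet> M (z - J)" using u(2) by simp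
  also have "\<dots> = (z - J) \<bullet> M (J - zs)" by (rule M_swap[OF M])
  finally have c: "0 \<le> (z - J) \<bullet> M (J - zs)" .
  have "normM M (z - zs)^2 = ((z - J) + (J - zs)) \<bullet> M ((z - J) + (J - zs))"
    by (simp add: nM_sq[OF M])
  also have "\<dots> = normM M (z - J)^2 + normM M (J - zs)^2 + 2 * ((z - J) \<bullet> M (J - zs))"
    by (simp only: M_expand[OF M] nM_sq[OF M])
  finally show ?thesis using c by linarith
qed

lemma relax_bound:
  fixes T :: "'a \<Rightarrow> 'a set"
  assumes T: "maximal_monotone T" and sig: "0 < \<sigma>"
    and u: "u \<in> T J" "M (z - J) = \<sigma> *\<^sub>R u" and zs: "zs \<in> zeros T"
    and g: "0 < g" "g < 2"
  shows "normM M ((1 - g) *\<^sub>R z + g *\<^sub>R J - zs)^2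
          \<le> normM M (z - zs)^2 - g * (2 - g) * normM M (z - J)^2"
proof -
  have e: "(1 - g) *\<^sub>R z + g *\<^sub>R J - zs = (1 - g) *\<^sub>R (z - zs) + g *\<^sub>R (J - zs)"
    by (simp add: algebra_simps)
  have "normM M ((1 - g) *\<^sub>R z + g *\<^sub>R J - zs)^2
      = (1-g) * normM M (z - zs)^2 + g * normM M (J - zs)^2 - g * (1-g) * normM M (z - J)^2"
    unfolding e nM_sq[OF M] relax_id by simp
  also have "\<dots> \<le> (1-g) * normM M (z - zs)^2 + g * (normM M (z - zs)^2 - normM M (z - J)^2)
                   - g * (1-g) * normM M (z - J)^2"
    using firm[OF T sig u zs] g by (intro diff_right_mono add_left_mono mult_left_mono) auto
  also have "\<dots> = normM M (z - zs)^2 - g * (2 - g) * normM M (z - J)^2"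
    by (simp add: algebra_simps)
  finally show ?thesis .
qed

end

lemma qbound_le1:
  fixes g s :: real
  assumes "0 < g" "g \<le> 1" "0 \<le> s" "s \<le> 1"
  shows "(1 - g) + g * s \<le> sqrt (1 - g * (1 - s^2))"
proof (rule real_le_rsqrt)
  have "1 - g * (1 - s^2) - ((1 - g) + g * s)^2 = g * (1 - g) * (1 - s)^2"
    by (simp add: power2_eq_square algebra_simps)
  moreover have "0 \<le> g * (1 - g) * (1 - s)^2" using assms by simp
  ultimately show "((1 - g) + g * s)^2 \<le> 1 - g * (1 - s^2)" by linarith
qed

lemma rho_bound:
  fixes q g d m D :: real
  assumes "g - 1 \<le> q" "0 \<le> m" "0 \<le> d" "d < 1" "0 \<le> D"
  shows "q * D + g * d * D / (1 - d) \<le> (1 / (1 - d)) * (q + d * (m + 1)) * D"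
proof -
  have "(1 - d) * q + g * d \<le> q + d * (m + 1)"
  proof -
    have "d * (g - q - m - 1) \<le> 0" using assms by (intro mult_nonneg_nonpos) auto
    then show ?thesis by (simp add: algebra_simps)
  qed
  then have h: "((1 - d) * q + g * d) / (1 - d) \<le> (q + d * (m + 1)) / (1 - d)"
    using assms by (intro divide_right_mono) auto
  have e1: "q + g * d / (1 - d) = ((1 - d) * q + g * d) / (1 - d)"
    using assms by (simp add: field_simps)
  have e2: "(1 / (1 - d)) * (q + d * (m + 1)) = (q + d * (m + 1)) / (1 - d)" by simp
  have "q + g * d / (1 - d) \<le> (1 / (1 - d)) * (q + d * (m + 1))"
    unfolding e1 e2 by (rule h)
  then have "(q + g * d / (1 - d)) * D \<le> (1 / (1 - d)) * (q + d * (m + 1)) * D"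
    using assms by (intro mult_right_mono) auto
  then show ?thesis by (simp add: algebra_simps)
qed

context
  fixes M :: "'a::euclidean_space \<Rightarrow> 'a" and T :: "'a \<Rightarrow> 'a set"
  assumes M: "self_adjoint_pd M" and Mmax: "lambda_max M = 1"
    and T: "maximal_monotone T" and Om: "zeros T \<noteq> {}"
begin

lemma step_basic:
  assumes sig: "0 < \<sigma>" and u: "u \<in> T J" "M (z - J) = \<sigma> *\<^sub>R u"
    and g: "0 < g" "g < 2" and dl: "0 \<le> d" "d < 1/2"
    and zp: "zp = g *\<^sub>R w + (1 - g) *\<^sub>R z"
    and wJ: "normM M (w - J) \<le> eta" "normM M (w - J) \<le> d * normM M (w - z)"
  shows "\<forall>zs\<in>zeros T. normM M (zp - zs) \<le> normM M (z - zs) + g * eta"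
    and "\<forall>zs\<in>zeros T. normM M (J - zs) \<le> normM M (z - zs)"
    and "(1 - d) * normM M (w - z) \<le> normM M (z - J)"
    and "normM M (z - J) \<le> (1 + d) * normM M (w - z)"
    and "normM M (z - J) \<le> distM M z (zeros T)"
    and "normM M (zp - z) = g * normM M (w - z)"
proof -
  show "\<forall>zs\<in>zeros T. normM M (zp - zs) \<le> normM M (z - zs) + g * eta"
  proof
    fix zs assume zs: "zs \<in> zeros T"
    define x where "x = (1 - g) *\<^sub>R z + g *\<^sub>R J"
    have "normM M (x - zs)^2 \<le> normM M (z - zs)^2 - g * (2 - g) * normM M (z - J)^2"
      unfolding x_def by (rule relax_bound[OF M T sig u zs g])
    also have "\<dots> \<le> normM M (z - zs)^2" using g by simp
    finally have "normM M (x - zs) \<le> normM M (z - zs)"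
      by (rule power2_le_imp_le) (rule nM_nonneg[OF M])
    moreover have e: "zp - zs = (x - zs) + g *\<^sub>R (w - J)" unfolding zp x_def by (simp add: algebra_simps)
    have "normM M (zp - zs) \<le> normM M (x - zs) + normM M (g *\<^sub>R (w - J))"
      unfolding e by (rule nM_triangle[OF M])
    then have "normM M (zp - zs) \<le> normM M (x - zs) + g * normM M (w - J)"
      using nM_scale[OF M, of g "w - J"] g by simp
    moreover have "g * normM M (w - J) \<le> g * eta" using wJ g by simp
    ultimately show "normM M (zp - zs) \<le> normM M (z - zs) + g * eta" by linarith
  qed
  show "\<forall>zs\<in>zeros T. normM M (J - zs) \<le> normM M (z - zs)"
  proof
    fix zs assume zs: "zs \<in> zeros T"
    have "normM M (J - zs)^2 \<le> normM M (z - zs)^2"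
      using firm[OF M T sig u zs] M_pos[OF M, of "z - J"] unfolding nM_sq[OF M] by linarith
    then show "normM M (J - zs) \<le> normM M (z - zs)" by (rule power2_le_imp_le) (rule nM_nonneg[OF M])
  qed
  have tri: "normM M (w - z) \<le> normM M (w - J) + normM M (J - z)"
    using nM_triangle_diff[OF M] by blast
  have tri2: "normM M (z - J) \<le> normM M (z - w) + normM M (w - J)"
    using nM_triangle_diff[OF M] by blast
  have c1: "normM M (J - z) = normM M (z - J)" "normM M (z - w) = normM M (w - z)"
    using nM_commute[OF M] by auto
  show "(1 - d) * normM M (w - z) \<le> normM M (z - J)" using tri c1 wJ by (simp add: algebra_simps)
  show "normM M (z - J) \<le> (1 + d) * normM M (w - z)" using tri2 c1 wJ by (simp add: algebra_simps)
  show "normM M (z - J) \<le> distM M z (zeros T)"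
  proof -
    obtain p where p: "p \<in> zeros T" "distM M z (zeros T) = normM M (p - z)"
      using distM_char[OF M T Om, of z] by blast
    have "normM M (z - J)^2 \<le> normM M (z - p)^2"
      using firm[OF M T sig u p(1)] M_pos[OF M, of "J - p"] unfolding nM_sq[OF M] by linarith
    then have "normM M (z - J) \<le> normM M (z - p)" by (rule power2_le_imp_le) (rule nM_nonneg[OF M])
    then show ?thesis using p nM_commute[OF M, of p z] by simp
  qed
  have "zp - z = g *\<^sub>R (w - z)" unfolding zp by (simp add: algebra_simps)
  then show "normM M (zp - z) = g * normM M (w - z)" using nM_scale[OF M, of g "w - z"] g by simp
qed

lemma step_contract:
  assumes sig: "0 < \<sigma>" and u: "u \<in> T J" "M (z - J) = \<sigma> *\<^sub>R u"
    and g: "0 < g" "g < 2" and dl: "0 \<le> d" "d < 1/2"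
    and zp: "zp = g *\<^sub>R w + (1 - g) *\<^sub>R z"
    and wJ: "normM M (w - J) \<le> d * normM M (w - z)"
    and kap: "0 < \<kappa>" and al: "0 < \<alpha>" and sk: "\<kappa> * \<alpha> \<le> \<sigma>"
    and sub: "\<forall>x. norm x \<le> r \<longrightarrow> T x \<noteq> {} \<longrightarrow> infdist x (zeros T) \<le> \<kappa> * infdist 0 (T x)"
    and Jr: "norm J \<le> r"
  shows "distM M zp (zeros T) \<le> (1 / (1 - d)) * (sqrt (1 - min g (2*g - g^2) * \<alpha>^2 / (\<alpha>^2 + 1))
               + d * (min g 1 / sqrt (\<alpha>^2 + 1) + 1)) * distM M z (zeros T)"
    and "(1 - sqrt (1 / (\<alpha>^2 + 1))) * distM M z (zeros T) \<le> normM M (z - J)"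
proof -
  define Dz where "Dz = distM M z (zeros T)"
  obtain p where p: "p \<in> zeros T" "Dz = normM M (p - z)"
    using distM_char[OF M T Om, of z] unfolding Dz_def by blast
  obtain p' where p': "p' \<in> zeros T" "distM M J (zeros T) = normM M (p' - J)"
      "\<forall>d\<in>zeros T. normM M (p' - J) \<le> normM M (d - J)"
    using distM_char[OF M T Om, of J] by blast
  define t where "t = normM M (z - J)"
  define a where "a = normM M (p' - J)"
  define s where "s = sqrt (1 / (\<alpha>^2 + 1))"
  have a0: "0 \<le> a" unfolding a_def by (rule nM_nonneg[OF M])
  have t0: "0 \<le> t" unfolding t_def by (rule nM_nonneg[OF M])
  have Dz0: "0 \<le> Dz" using p(2) nM_nonneg[OF M] by simp
  have s0: "0 \<le> s" unfolding s_def by simp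
  have s2: "s^2 = 1 / (\<alpha>^2 + 1)" unfolding s_def by simp
  have ap: "0 < \<alpha>^2 + 1" using al by (simp add: add_pos_pos)
  have s1: "s \<le> 1"
  proof -
    have "1 / (\<alpha>^2 + 1) \<le> 1 / 1" by (rule divide_left_mono) (use ap in auto)
    then show ?thesis unfolding s_def by simp
  qed
  have s21': "s^2 \<le> 1" using s0 s1 by (simp add: power_le_one)
  have afrac: "\<alpha>^2 / (\<alpha>^2 + 1) = 1 - s^2" unfolding s2
    using ap by (simp add: field_simps)
  have ai: "\<alpha> * a \<le> t"
  proof -
    have Clo: "closed (zeros T)" by (rule zeros_closed[OF T])
    obtain q0 where q0: "q0 \<in> zeros T" "infdist J (zeros T) = dist J q0"
      using infdist_attains_inf[OF Clo Om] by blast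
    have "a \<le> normM M (q0 - J)" using p'(3) q0(1) unfolding a_def by blast
    also have "\<dots> \<le> norm (q0 - J)" by (rule nM_le_norm'[OF M Mmax])
    also have "\<dots> = infdist J (zeros T)" using q0(2) by (simp add: dist_norm norm_minus_commute)
    also have "\<dots> \<le> \<kappa> * infdist 0 (T J)" using sub Jr u(1) by blast
    also have "\<dots> \<le> \<kappa> * norm u"
    proof -
      have "infdist 0 (T J) \<le> dist 0 u" by (rule infdist_le[OF u(1)])
      then show ?thesis using kap by (simp add: mult_left_mono)
    qed
    finally have aku: "a \<le> \<kappa> * norm u" .
    have "norm (M (z - J)) = \<sigma> * norm u" using u(2) sig by simp
    moreover have "norm (M (z - J)) \<le> t"
    proof -
      have "(norm (M (z - J)))^2 \<le> t^2" unfolding t_def nM_sq[OF M] by (rule Mx_norm[OF M Mmax])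
      then show ?thesis using t0 by (rule power2_le_imp_le)
    qed
    ultimately have su: "\<sigma> * norm u \<le> t" by simp
    have "\<alpha> * a \<le> \<alpha> * (\<kappa> * norm u)" using aku al by simp
    also have "\<dots> = (\<kappa> * \<alpha>) * norm u" by simp
    also have "\<dots> \<le> \<sigma> * norm u" using sk by (simp add: mult_right_mono)
    finally show ?thesis using su by linarith
  qed
  have aii: "a^2 + t^2 \<le> Dz^2"
  proof -
    have f: "normM M (J - p)^2 + t^2 \<le> normM M (z - p)^2"
      unfolding t_def by (rule firm[OF M T sig u p(1)])
    have "a \<le> normM M (J - p)" using p'(3) p(1) nM_commute[OF M, of J p] unfolding a_def by simp
    then have a2: "a^2 \<le> normM M (J - p)^2" by (rule power_mono[OF _ a0])
    have e: "normM M (z - p) = Dz" using p(2) nM_commute[OF M, of z p] by simp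
    show ?thesis using f a2 unfolding e by linarith
  qed
  have aiii: "a \<le> s * Dz"
  proof -
    have "(\<alpha> * a)^2 \<le> t^2" using ai al a0 by (intro power_mono) auto
    then have "\<alpha>^2 * a^2 \<le> t^2" by (simp add: power_mult_distrib)
    then have "\<alpha>^2 * a^2 + a^2 \<le> Dz^2" using aii by linarith
    then have "a^2 * (\<alpha>^2 + 1) \<le> Dz^2" by (simp add: algebra_simps)
    then have "a^2 \<le> Dz^2 / (\<alpha>^2 + 1)" using ap by (simp add: pos_le_divide_eq)
    also have "\<dots> = (s * Dz)^2" by (simp add: power_mult_distrib s2)
    finally have "a^2 \<le> (s * Dz)^2" .
    moreover have "0 \<le> s * Dz" using s0 Dz0 by simp
    ultimately show ?thesis by (rule power2_le_imp_le)
  qed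
  have aiv: "Dz \<le> a + t"
  proof -
    have "Dz \<le> normM M (p' - z)" unfolding Dz_def by (rule distM_le[OF M T Om p'(1)])
    also have "\<dots> \<le> normM M (p' - J) + normM M (J - z)" by (rule nM_triangle_diff[OF M])
    also have "\<dots> = a + t" unfolding a_def t_def using nM_commute[OF M, of J z] by simp
    finally show ?thesis .
  qed
  show "(1 - sqrt (1 / (\<alpha>^2 + 1))) * distM M z (zeros T) \<le> normM M (z - J)"
    using aiv aiii unfolding Dz_def[symmetric] s_def[symmetric] t_def[symmetric] by (simp add: algebra_simps)
  have tD: "t \<le> Dz"
  proof -
    have "t^2 \<le> Dz^2" using aii zero_le_power2[of a] by linarith
    then show ?thesis using Dz0 by (rule power2_le_imp_le)
  qed
  define mn where "mn = min g (2*g - g^2)"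
  define q where "q = sqrt (1 - mn * \<alpha>^2 / (\<alpha>^2 + 1))"
  have Qeq: "1 - mn * \<alpha>^2 / (\<alpha>^2 + 1) = 1 - mn * (1 - s^2)"
    using afrac by (simp add: times_divide_eq_right[symmetric])
  have qmn: "q = sqrt (1 - mn * (1 - s^2))" unfolding q_def Qeq ..
  define x where "x = (1 - g) *\<^sub>R z + g *\<^sub>R J"
  have qge: "g - 1 \<le> q"
    and Dx: "distM M x (zeros T) \<le> q * Dz"
  proof -
    have "g - 1 \<le> q \<and> distM M x (zeros T) \<le> q * Dz"
    proof (cases "g \<le> 1")
      case True
      have "g * g \<le> g * 1" using True g by (intro mult_left_mono) auto
      then have mng: "mn = g" unfolding mn_def by (simp add: power2_eq_square min_def)
      have qq: "q = sqrt (1 - g * (1 - s^2))" unfolding qmn mng ..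
      have qpos: "0 \<le> q"
      proof -
        have "g * (1 - s^2) \<le> 1 * 1" using True g s0 s21' zero_le_power2[of s] by (intro mult_mono) auto
        then show ?thesis unfolding qq by simp
      qed
      define c where "c = (1 - g) *\<^sub>R p + g *\<^sub>R p'"
      have cO: "c \<in> zeros T" unfolding c_def
        using True g by (intro convexD[OF zeros_convex[OF T] p(1) p'(1)]) auto
      have "distM M x (zeros T) \<le> normM M (c - x)" by (rule distM_le[OF M T Om cO])
      also have "c - x = (1 - g) *\<^sub>R (p - z) + g *\<^sub>R (p' - J)"
        unfolding c_def x_def by (simp add: algebra_simps)
      also have "normM M \<dots> \<le> normM M ((1 - g) *\<^sub>R (p - z)) + normM M (g *\<^sub>R (p' - J))"
        by (rule nM_triangle[OF M])
      also have "\<dots> = (1 - g) * Dz + g * a"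
        using True g unfolding nM_scale[OF M] a_def p(2) by simp
      also have "\<dots> \<le> (1 - g) * Dz + g * (s * Dz)" using aiii g by simp
      also have "\<dots> = ((1 - g) + g * s) * Dz" by (simp add: algebra_simps)
      also have "\<dots> \<le> q * Dz"
        unfolding qq using qbound_le1[OF g(1) True s0 s1] Dz0 by (intro mult_right_mono)
      finally show ?thesis using qpos True by simp
    next
      case False
      have "2*g - g^2 < g"
      proof -
        have "g * 1 < g * g" using False g by (intro mult_strict_left_mono) auto
        then show ?thesis by (simp add: power2_eq_square)
      qed
      then have mng: "mn = 2*g - g^2" unfolding mn_def by simp
      have Q2: "1 - mn * (1 - s^2) = s^2 + (g - 1)^2 * (1 - s^2)"
        unfolding mng by (simp add: power2_eq_square algebra_simps)
      have gg: "(g - 1)^2 \<le> 1"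
      proof -
        have "(g - 1)^2 \<le> 1^2" using False g by (intro power_mono) auto
        then show ?thesis by simp
      qed
      have s21: "s^2 \<le> 1" using s0 s1 by (simp add: power_le_one)
      have qq: "q = sqrt (s^2 + (g - 1)^2 * (1 - s^2))" unfolding qmn Q2 ..
      have qg: "g - 1 \<le> q"
      proof -
        have "(g - 1)^2 * s^2 \<le> 1 * s^2" using gg by (intro mult_right_mono) auto
        then have "(g - 1)^2 \<le> s^2 + (g - 1)^2 * (1 - s^2)" by (simp add: algebra_simps)
        then show ?thesis unfolding qq by (rule real_le_rsqrt)
      qed
      define N where "N = normM M (z - p')^2"
      have aJ: "normM M (J - p') = a" unfolding a_def by (rule nM_commute[OF M])
      have fN: "a^2 + t^2 \<le> N"
        using firm[OF M T sig u p'(1)] unfolding N_def aJ t_def .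
      have ex: "x - p' = (1 - g) *\<^sub>R (z - p') + g *\<^sub>R (J - p')"
        unfolding x_def by (simp add: algebra_simps)
      have exd: "(z - p') - (J - p') = z - J" by simp
      have "normM M (x - p')^2 = (1-g) * normM M (z - p')^2 + g * normM M (J - p')^2
               - g * (1-g) * normM M (z - J)^2"
        unfolding ex nM_sq[OF M] relax_id[OF M] exd ..
      also have "\<dots> = (1 - g) * N + g * a^2 - g * (1 - g) * t^2"
        unfolding N_def aJ t_def ..
      finally have "normM M (x - p')^2 = (1 - g) * N + g * a^2 - g * (1 - g) * t^2" .
      also have "\<dots> \<le> (1 - g) * (a^2 + t^2) + g * a^2 - g * (1 - g) * t^2"
        using fN False by (simp add: mult_left_mono_neg)
      also have "\<dots> = (1 - (g - 1)^2) * a^2 + (g - 1)^2 * (a^2 + t^2)"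
        by (simp add: power2_eq_square algebra_simps)
      also have "\<dots> \<le> (1 - (g - 1)^2) * (s * Dz)^2 + (g - 1)^2 * Dz^2"
      proof (intro add_mono mult_left_mono)
        show "a^2 \<le> (s * Dz)^2" using aiii a0 by (intro power_mono) auto
        show "a^2 + t^2 \<le> Dz^2" by (rule aii)
      qed (use gg in auto)
      also have "\<dots> = (s^2 + (g - 1)^2 * (1 - s^2)) * Dz^2"
        by (simp add: power_mult_distrib algebra_simps)
      also have "\<dots> = (q * Dz)^2"
      proof -
        have "0 \<le> s^2 + (g - 1)^2 * (1 - s^2)" using s21 by (simp add: add_nonneg_nonneg)
        then show ?thesis unfolding qq by (simp add: power_mult_distrib)
      qed
      finally have sq: "normM M (x - p')^2 \<le> (q * Dz)^2" .
      have "0 \<le> q" using qg False by linarith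
      then have "0 \<le> q * Dz" using Dz0 by simp
      with sq have "normM M (x - p') \<le> q * Dz" by (rule power2_le_imp_le)
      moreover have "distM M x (zeros T) \<le> normM M (p' - x)" by (rule distM_le[OF M T Om p'(1)])
      ultimately show ?thesis using qg nM_commute[OF M, of p' x] by simp
    qed
    then show "g - 1 \<le> q" "distM M x (zeros T) \<le> q * Dz" by auto
  qed
  have Dzp: "distM M zp (zeros T) \<le> q * Dz + g * normM M (w - J)"
  proof -
    obtain p'' where p'': "p'' \<in> zeros T" "distM M x (zeros T) = normM M (p'' - x)"
      using distM_char[OF M T Om, of x] by blast
    have "distM M zp (zeros T) \<le> normM M (p'' - zp)" by (rule distM_le[OF M T Om p''(1)])
    also have "\<dots> \<le> normM M (p'' - x) + normM M (x - zp)" by (rule nM_triangle_diff[OF M])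
    also have "x - zp = g *\<^sub>R (J - w)" unfolding x_def zp by (simp add: algebra_simps)
    also have "normM M (g *\<^sub>R (J - w)) = g * normM M (w - J)"
      using g unfolding nM_scale[OF M] using nM_commute[OF M, of J w] by simp
    finally show ?thesis using Dx p''(2) by simp
  qed
  have wz: "(1 - d) * normM M (w - z) \<le> t"
  proof -
    have "normM M (w - z) \<le> normM M (w - J) + normM M (J - z)" by (rule nM_triangle_diff[OF M])
    then show ?thesis using wJ nM_commute[OF M, of J z] unfolding t_def by (simp add: algebra_simps)
  qed
  have "g * normM M (w - J) \<le> g * d * Dz / (1 - d)"
  proof -
    have "(1 - d) * normM M (w - z) \<le> Dz" using wz tD by linarith
    then have "normM M (w - z) \<le> Dz / (1 - d)" using dl by (simp add: pos_le_divide_eq mult.commute)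
    then have "d * normM M (w - z) \<le> d * (Dz / (1 - d))" by (rule mult_left_mono) (use dl in auto)
    then have "normM M (w - J) \<le> d * Dz / (1 - d)" using wJ by simp
    then have "g * normM M (w - J) \<le> g * (d * Dz / (1 - d))" by (rule mult_left_mono) (use g in auto)
    then show ?thesis by (simp add: mult.assoc)
  qed
  then have "distM M zp (zeros T) \<le> q * Dz + g * d * Dz / (1 - d)" using Dzp by linarith
  also have "\<dots> \<le> (1 / (1 - d)) * (q + d * (min g 1 / sqrt (\<alpha>^2 + 1) + 1)) * Dz"
  proof (rule rho_bound)
    show "0 \<le> min g 1 / sqrt (\<alpha>^2 + 1)" using g ap by simp
  qed (use qge dl Dz0 in auto)
  finally show "distM M zp (zeros T) \<le> (1 / (1 - d)) * (sqrt (1 - min g (2*g - g^2) * \<alpha>^2 / (\<alpha>^2 + 1))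
               + d * (min g 1 / sqrt (\<alpha>^2 + 1) + 1)) * distM M z (zeros T)"
    unfolding q_def mn_def Dz_def .
qed

end

lemma final_real:
  fixes c e f P Wk Dk D0 h W :: real
  assumes "0 < c" "0 < e" "0 < f" "0 \<le> P" "e * Wk \<le> Dk" "Dk \<le> P * D0"
    "f * D0 \<le> h * W"
  shows "c * Wk \<le> (h / (e * f)) * P * (c * W)"
proof -
  have "c * (e * Wk) \<le> c * Dk" using assms by (intro mult_left_mono) auto
  also have "\<dots> \<le> c * (P * D0)" using assms by (intro mult_left_mono) auto
  finally have a1: "c * (e * Wk) \<le> c * (P * D0)" .
  have "f * (c * (e * Wk)) \<le> f * (c * (P * D0))" using a1 assms by (intro mult_left_mono) auto
  also have "f * (c * (P * D0)) = (c * P) * (f * D0)" by (simp add: algebra_simps)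
  also have "\<dots> \<le> (c * P) * (h * W)" using assms by (intro mult_left_mono) auto
  finally have "(e * f) * (c * Wk) \<le> c * P * h * W" by (simp add: algebra_simps)
  then have "c * Wk \<le> (c * P * h * W) / (e * f)" using assms by (simp add: pos_le_divide_eq mult.commute)
  also have "\<dots> = (h / (e * f)) * P * (c * W)" by (simp add: algebra_simps)
  finally show ?thesis .
qed

theorem corollary2:
  fixes T :: "'a::euclidean_space \<Rightarrow> 'a set" and M :: "'a \<Rightarrow> 'a"
    and z :: "nat \<Rightarrow> 'a" and \<sigma> \<eta> :: "nat \<Rightarrow> real"
    and \<gamma> \<delta> r \<kappa> \<alpha> :: real and zbar0 :: 'a
  assumes T: "maximal_monotone T" and Omega: "zeros T \<noteq> {}"
    and M: "self_adjoint_pd M" and Mmax: "lambda_max M = 1"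
    and gamma: "0 < \<gamma>" "\<gamma> < 2"
    and delta: "0 \<le> \<delta>" "\<delta> < 1/2"
    and sigma_nn: "\<forall>k. 0 \<le> \<sigma> k" and eta_nn: "\<forall>k. 0 \<le> \<eta> k"
    and eta_sum: "summable \<eta>"
    and sigma_inf: "(INF k. \<sigma> k) > 0"
    and steps: "\<forall>k. IGPPAstep T (z k) (\<sigma> k) (\<eta> k) \<delta> \<gamma> M (z (Suc k))"
    and bms: "bounded_metric_subregular T"
    and zbar0: "zbar0 \<in> zeros T" "\<forall>d \<in> zeros T. normM M (zbar0 - z 0) \<le> normM M (d - z 0)"
    and r: "r \<ge> norm zbar0 + (1 / lambda_min M) * (distM M (z 0) (zeros T) + \<gamma> * (\<Sum>k. \<eta> k))"
    and kappa: "\<kappa> > 0"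
    and kappa_r: "\<forall>x. norm x \<le> r \<longrightarrow> T x \<noteq> {} \<longrightarrow> infdist x (zeros T) \<le> \<kappa> * infdist 0 (T x)"
    and alpha: "\<alpha> > 0"
    and rho: "(1 / (1 - \<delta>)) * (sqrt (1 - min \<gamma> (2*\<gamma> - \<gamma>^2) * \<alpha>^2 / (\<alpha>^2 + 1))
               + \<delta> * (min \<gamma> 1 / sqrt (\<alpha>^2 + 1) + 1)) < 1"
    and sigma_ge: "\<forall>k. \<sigma> k \<ge> \<kappa> * \<alpha>"
  shows "\<forall>k. normM M (z (Suc k) - z k) \<le>
     ((1 + \<delta>) / ((1 - \<delta>) * (1 - sqrt (1 / (\<alpha>^2 + 1)))))
     * ((1 / (1 - \<delta>)) * (sqrt (1 - min \<gamma> (2*\<gamma> - \<gamma>^2) * \<alpha>^2 / (\<alpha>^2 + 1))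
               + \<delta> * (min \<gamma> 1 / sqrt (\<alpha>^2 + 1) + 1))) ^ k
     * normM M (z 1 - z 0)"
proof -
  have sig: "0 < \<sigma> k" for k
  proof -
    have "0 < \<kappa> * \<alpha>" using kappa alpha by simp
    then show ?thesis using sigma_ge by (meson less_le_trans)
  qed
  have "\<forall>k. \<exists>w. z (Suc k) = \<gamma> *\<^sub>R w + (1 - \<gamma>) *\<^sub>R z k \<and>
      normM M (w - resolventM T M (\<sigma> k) (z k)) \<le> min (\<eta> k) (\<delta> * normM M (w - z k))"
    using steps unfolding IGPPAstep_def by blast
  then obtain w where w: "\<forall>k. z (Suc k) = \<gamma> *\<^sub>R w k + (1 - \<gamma>) *\<^sub>R z k \<and>
      normM M (w k - resolventM T M (\<sigma> k) (z k)) \<le> min (\<eta> k) (\<delta> * normM M (w k - z k))"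
    using choice[of "\<lambda>k w. z (Suc k) = \<gamma> *\<^sub>R w + (1 - \<gamma>) *\<^sub>R z k \<and>
      normM M (w - resolventM T M (\<sigma> k) (z k)) \<le> min (\<eta> k) (\<delta> * normM M (w - z k))"] by blast
  define J where "J = (\<lambda>k. resolventM T M (\<sigma> k) (z k))"
  have "\<forall>k. \<exists>u. u \<in> T (J k) \<and> M (z k - J k) = \<sigma> k *\<^sub>R u"
    using resolvent_prop[OF T Omega M sig] unfolding J_def by blast
  then obtain u where u: "\<forall>k. u k \<in> T (J k) \<and> M (z k - J k) = \<sigma> k *\<^sub>R u k"
    using choice[of "\<lambda>k u. u \<in> T (J k) \<and> M (z k - J k) = \<sigma> k *\<^sub>R u"] by blast
  have u1: "u k \<in> T (J k)" and u2: "M (z k - J k) = \<sigma> k *\<^sub>R u k" for k using u by auto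
  have zp: "z (Suc k) = \<gamma> *\<^sub>R w k + (1 - \<gamma>) *\<^sub>R z k" for k using w by blast
  have wJ1: "normM M (w k - J k) \<le> \<eta> k" and wJ2: "normM M (w k - J k) \<le> \<delta> * normM M (w k - z k)" for k
    using w unfolding J_def by auto
  note basic = step_basic[OF M Mmax T Omega sig u1 u2 gamma delta zp wJ1 wJ2]
  have zb: "zbar0 \<in> zeros T" using zbar0 by blast
  have fej: "normM M (z k - zbar0) \<le> normM M (z 0 - zbar0) + \<gamma> * (\<Sum>i<k. \<eta> i)" for k
  proof (induction k)
    case 0 then show ?case by simp
  next
    case (Suc k)
    have "normM M (z (Suc k) - zbar0) \<le> normM M (z k - zbar0) + \<gamma> * \<eta> k"
      using basic(1)[of k] zb by blast
    then show ?case using Suc.IH by (simp add: algebra_simps)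
  qed
  have lmpos: "0 < lambda_min M" using lam_min[OF M] by simp
  have dist0: "distM M (z 0) (zeros T) = normM M (z 0 - zbar0)"
    using distM_eq[OF M zb zbar0(2)] nM_commute[OF M, of zbar0 "z 0"] by simp
  have Jr: "norm (J k) \<le> r" for k
  proof -
    have "norm (J k) \<le> norm zbar0 + norm (J k - zbar0)" by (rule norm_triangle_sub)
    also have "norm (J k - zbar0) \<le> normM M (J k - zbar0) / lambda_min M"
      by (rule norm_le_nM[OF M Mmax])
    also have "normM M (J k - zbar0) \<le> normM M (z k - zbar0)" using basic(2)[of k] zb by blast
    also have "\<dots> \<le> distM M (z 0) (zeros T) + \<gamma> * (\<Sum>k. \<eta> k)"
    proof -
      have "(\<Sum>i<k. \<eta> i) \<le> (\<Sum>k. \<eta> k)" using eta_sum eta_nn by (intro sum_le_suminf) auto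
      then have "\<gamma> * (\<Sum>i<k. \<eta> i) \<le> \<gamma> * (\<Sum>k. \<eta> k)" using gamma by simp
      then show ?thesis using fej[of k] dist0 by linarith
    qed
    finally have "norm (J k) \<le> norm zbar0 + (distM M (z 0) (zeros T) + \<gamma> * (\<Sum>k. \<eta> k)) / lambda_min M"
      using lmpos by (simp add: divide_right_mono)
    then show ?thesis using r by simp
  qed
  have sk: "\<kappa> * \<alpha> \<le> \<sigma> k" for k using sigma_ge by simp
  note contr = step_contract[OF M Mmax T Omega sig u1 u2 gamma delta zp wJ2 kappa alpha sk kappa_r Jr]
  define \<rho> where "\<rho> = (1 / (1 - \<delta>)) * (sqrt (1 - min \<gamma> (2*\<gamma> - \<gamma>^2) * \<alpha>^2 / (\<alpha>^2 + 1))
               + \<delta> * (min \<gamma> 1 / sqrt (\<alpha>^2 + 1) + 1))"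
  have rho0: "0 \<le> \<rho>"
  proof -
    have ap: "0 < \<alpha>^2 + 1" using alpha by (simp add: add_pos_pos)
    have f1: "\<alpha>^2 / (\<alpha>^2 + 1) \<le> 1" using ap by simp
    have f0: "0 \<le> \<alpha>^2 / (\<alpha>^2 + 1)" using ap by simp
    have m1: "min \<gamma> (2*\<gamma> - \<gamma>^2) \<le> 1"
    proof -
      have "0 \<le> (\<gamma> - 1)^2" by simp
      then have "2*\<gamma> - \<gamma>^2 \<le> 1" by (simp add: power2_eq_square algebra_simps)
      then show ?thesis by simp
    qed
    have "min \<gamma> (2*\<gamma> - \<gamma>^2) * (\<alpha>^2 / (\<alpha>^2 + 1)) \<le> 1 * (\<alpha>^2 / (\<alpha>^2 + 1))"
      using m1 f0 by (rule mult_right_mono)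
    then have "min \<gamma> (2*\<gamma> - \<gamma>^2) * \<alpha>^2 / (\<alpha>^2 + 1) \<le> 1" using f1 by simp
    then have "0 \<le> sqrt (1 - min \<gamma> (2*\<gamma> - \<gamma>^2) * \<alpha>^2 / (\<alpha>^2 + 1))" by simp
    moreover have "0 \<le> \<delta> * (min \<gamma> 1 / sqrt (\<alpha>^2 + 1) + 1)" using delta gamma ap by simp
    moreover have "0 \<le> 1 / (1 - \<delta>)" using delta by simp
    ultimately show ?thesis unfolding \<rho>_def by simp
  qed
  have Dk: "distM M (z k) (zeros T) \<le> \<rho> ^ k * distM M (z 0) (zeros T)" for k
  proof (induction k)
    case 0 then show ?case by simp
  next
    case (Suc k)
    have "distM M (z (Suc k)) (zeros T) \<le> \<rho> * distM M (z k) (zeros T)"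
      using contr(1)[of k] unfolding \<rho>_def by simp
    also have "\<dots> \<le> \<rho> * (\<rho> ^ k * distM M (z 0) (zeros T))"
      using Suc.IH rho0 by (rule mult_left_mono)
    finally show ?case by (simp add: mult.assoc)
  qed
  have s1: "0 < 1 - sqrt (1 / (\<alpha>^2 + 1))"
  proof -
    have g1: "1 < \<alpha>^2 + 1" using alpha by simp
    then have "1 / (\<alpha>^2 + 1) < 1" using g1 by (simp add: divide_less_eq_1 add_pos_pos)
    then have "sqrt (1 / (\<alpha>^2 + 1)) < 1" by simp
    then show ?thesis by simp
  qed
  show ?thesis
  proof
    fix k
    have e1: "normM M (z (Suc k) - z k) = \<gamma> * normM M (w k - z k)" by (rule basic(6))
    have e2: "normM M (z 1 - z 0) = \<gamma> * normM M (w 0 - z 0)" using basic(6)[of 0] by simp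
    have a: "(1 - \<delta>) * normM M (w k - z k) \<le> distM M (z k) (zeros T)"
      using basic(3)[of k] basic(5)[of k] by linarith
    have b: "(1 - sqrt (1 / (\<alpha>^2 + 1))) * distM M (z 0) (zeros T) \<le> (1 + \<delta>) * normM M (w 0 - z 0)"
      using contr(2)[of 0] basic(4)[of 0] by linarith
    have "\<gamma> * normM M (w k - z k) \<le> ((1 + \<delta>) / ((1 - \<delta>) * (1 - sqrt (1 / (\<alpha>^2 + 1)))))
       * \<rho> ^ k * (\<gamma> * normM M (w 0 - z 0))"
      by (rule final_real[OF _ _ s1 _ a Dk b]) (use gamma delta rho0 in auto)
    then show "normM M (z (Suc k) - z k) \<le>
     ((1 + \<delta>) / ((1 - \<delta>) * (1 - sqrt (1 / (\<alpha>^2 + 1)))))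
     * ((1 / (1 - \<delta>)) * (sqrt (1 - min \<gamma> (2*\<gamma> - \<gamma>^2) * \<alpha>^2 / (\<alpha>^2 + 1))
               + \<delta> * (min \<gamma> 1 / sqrt (\<alpha>^2 + 1) + 1))) ^ k
     * normM M (z 1 - z 0)"
      unfolding e1 e2 \<rho>_def[symmetric] .
  qed
qed


end
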